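(* For $m,l,r\in\mathbb{N}$ with $l,r\le m$, \[ [m-l]_q^![m-r]_q^!\,x^{-l}\Delta^{(-m)}(-t)y^{-r}=[l]_q^![r]_q^!\,t^{l+r-m}\,y^{l-m}\widetilde\Delta^{(-m)}(-t)x^{r-m} \] as formal Laurent series in $t$ with coefficients in $\mathbb{V}$.
   Context: $\mathbb{F}$ is a field of characteristic zero, $q\in\mathbb{F}$ nonzero and not a root of unity. $[n]_q=\frac{q^n-q^{-n}}{q-q^{-1}}$, $[n]_q^!=[n]_q[n-1]_q\cdots[1]_q$, $[0]_q^!=1$. $\mathbb{V}$ is the free algebra over $\mathbb{F}$ on letters $x,y$, with basis the words ($\mathbf 1$ the empty word); $t$ is an indeterminate. Put $\bar x=1,\bar y=-1$. A word $a_1\cdots a_n$ is Catalan if $\bar a_1+\dots+\bar a_i\ge0$ for $1\le i\le n-1$ and $\bar a_1+\dots+\bar a_n=0$; $\mathrm{Cat}_n$ is the set of Catalan words of length $2n$. For $m\in\mathbb{Z},n\in\mathbb{N}$, $\Delta^{(m)}_n=\sum_{a_1\cdots a_{2n}\in\mathrm{Cat}_n}\prod_{i=1}^{2n}[\bar a_1+\dots+\bar a_{i-1}+m(\bar a_i+1)/2]_q\,a_1\cdots a_{2n}$ and $\Delta^{(m)}(t)=\sum_{n\in\mathbb{N}}\Delta^{(m)}_nt^n$. $\widetilde\Delta^{(m)}_n$ is obtained from $\Delta^{(m)}_n$ by interchanging the letters $x$ and $y$ in every word, and $\widetilde\Delta^{(m)}(t)=\sum_n\widetilde\Delta^{(m)}_nt^n$.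 Deletion: for a word $w=a_1\cdots a_n$ ($n\ge1$), $x^{-1}w=a_2\cdots a_n$ if $a_1=x$ and $0$ otherwise; $x^{-1}\mathbf 1=0$; similarly $y^{-1}w$ deletes a leading $y$, and $wx^{-1}$, $wy^{-1}$ delete a trailing $x$, resp. $y$ (otherwise $0$). These are extended linearly and coefficientwise to series; for $k\ge1$, $x^{-k}$ (resp. $y^{-k}$, etc.) is the $k$-fold application, and exponent $0$ means the identity. *)

theory Defs
  imports Complex_Main "HOL-Library.Function_Algebras"
begin

datatype letter = X | Y

type_synonym word = "letter list"

(* An element of V is represented by its coefficient function on the word basis.
   (All elements used below are finitely supported.) *)
type_synonym 'a V = "word \<Rightarrow> 'a"

definition qint :: "'a::field \<Rightarrow> int \<Rightarrow> 'a" where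
  "qint q n = (q powi n - q powi (-n)) / (q - inverse q)"

definition qfact :: "'a::field \<Rightarrow> nat \<Rightarrow> 'a" where
  "qfact q n = (\<Prod>i=1..n. qint q (int i))"

definition bar :: "letter \<Rightarrow> int" where
  "bar a = (if a = X then 1 else -1)"

definition psum :: "word \<Rightarrow> nat \<Rightarrow> int" where
  "psum w i = (\<Sum>j<i. bar (w ! j))"

definition catalan :: "word \<Rightarrow> bool" where
  "catalan w \<longleftrightarrow> (\<forall>i. 1 \<le> i \<and> i \<le> length w - 1 \<longrightarrow> psum w i \<ge> 0) \<and> psum w (length w) = 0"

definition Cat :: "nat \<Rightarrow> word set" where
  "Cat n = {w. catalan w \<and> length w = 2 * n}"

definition basis_word :: "word \<Rightarrow> 'a::zero_neq_one V" where
  "basis_word u = (\<lambda>w. if w = u then 1 else 0)"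

definition smult_V :: "'a::times \<Rightarrow> 'a V \<Rightarrow> 'a V" where
  "smult_V c v = (\<lambda>w. c * v w)"

(* Delta^{(m)}_n ; note (\<bar>a_i+1)/2 = 1 if a_i = x and 0 if a_i = y *)
definition Delta :: "'a::field \<Rightarrow> int \<Rightarrow> nat \<Rightarrow> 'a V" where
  "Delta q m n = (\<Sum>u\<in>Cat n.
      smult_V (\<Prod>i=1..2*n. qint q (psum u (i - 1) + (if u ! (i - 1) = X then m else 0)))
              (basis_word u))"

definition swap_letter :: "letter \<Rightarrow> letter" where
  "swap_letter a = (if a = X then Y else X)"

definition Delta_tilde :: "'a::field \<Rightarrow> int \<Rightarrow> nat \<Rightarrow> 'a V" where
  "Delta_tilde q m n = (\<Sum>u\<in>Cat n.
      smult_V (\<Prod>i=1..2*n. qint q (psum u (i - 1) + (if u ! (i - 1) = X then m else 0)))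
              (basis_word (map swap_letter u)))"

(* Deletions, extended linearly: a^{-1} v  and  v a^{-1}.
   Coefficient of w in a^{-1} v is the coefficient of a w in v. *)
definition del_left :: "letter \<Rightarrow> 'a V \<Rightarrow> 'a V" where
  "del_left a v = (\<lambda>w. v (a # w))"

definition del_right :: "letter \<Rightarrow> 'a V \<Rightarrow> 'a V" where
  "del_right a v = (\<lambda>w. v (w @ [a]))"

definition del_left_pow :: "letter \<Rightarrow> nat \<Rightarrow> 'a V \<Rightarrow> 'a V" where
  "del_left_pow a k = (del_left a ^^ k)"

definition del_right_pow :: "letter \<Rightarrow> nat \<Rightarrow> 'a V \<Rightarrow> 'a V" where
  "del_right_pow a k = (del_right a ^^ k)"

(* Formal power series in t over V: nat \<Rightarrow> V (coefficient of t^n).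
   Formal Laurent series in t over V: int \<Rightarrow> V (coefficient of t^N). *)
type_synonym 'a Vps = "nat \<Rightarrow> 'a V"
type_synonym 'a Vls = "int \<Rightarrow> 'a V"

definition ps_neg :: "'a::comm_ring_1 Vps \<Rightarrow> 'a Vps" where
  "ps_neg f = (\<lambda>n. smult_V ((-1) ^ n) (f n))"

definition to_laurent :: "'a::zero Vps \<Rightarrow> 'a Vls" where
  "to_laurent f = (\<lambda>N. if N \<ge> 0 then f (nat N) else (\<lambda>_. 0))"

(* multiplication by t^k, k an integer *)
definition lshift :: "int \<Rightarrow> 'a Vls \<Rightarrow> 'a Vls" where
  "lshift k F = (\<lambda>N. F (N - k))"

definition ls_smult :: "'a::times \<Rightarrow> 'a Vls \<Rightarrow> 'a Vls" where
  "ls_smult c F = (\<lambda>N. smult_V c (F N))"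

definition ps_map :: "('a V \<Rightarrow> 'a V) \<Rightarrow> 'a Vps \<Rightarrow> 'a Vps" where
  "ps_map g f = (\<lambda>n. g (f n))"

definition Delta_ps :: "'a::field \<Rightarrow> int \<Rightarrow> 'a Vps" where
  "Delta_ps q m = Delta q m"

definition Delta_tilde_ps :: "'a::field \<Rightarrow> int \<Rightarrow> 'a Vps" where
  "Delta_tilde_ps q m = Delta_tilde q m"

end

theory Submission
  imports Defs
begin

fun P :: "'a::field \<Rightarrow> int \<Rightarrow> int \<Rightarrow> word \<Rightarrow> 'a" where
  "P q mm h [] = 1"
| "P q mm h (a # u) = (if h \<ge> 0 then qint q (h + (if a = X then mm else 0)) else 0) * P q mm (h + bar a) u"

fun P2 :: "'a::field \<Rightarrow> int \<Rightarrow> int \<Rightarrow> word \<Rightarrow> 'a" where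
  "P2 q m h [] = 1"
| "P2 q m h (a # u) = (if 0 \<le> h \<and> h \<le> m then qint q (h + (if a = X then - m else 0)) else 0) * P2 q m (h + bar a) u"

fun endh :: "int \<Rightarrow> word \<Rightarrow> int" where
  "endh h [] = h"
| "endh h (a # u) = endh (h + bar a) u"

lemma psum_0[simp]: "psum u 0 = 0" by (simp add: psum_def)
lemma psum_Cons_Suc[simp]: "psum (a # u) (Suc i) = bar a + psum u i"
  unfolding psum_def by (subst sum.lessThan_Suc_shift) simp

lemma endh_psum: "endh h u = h + psum u (length u)"
  by (induction u arbitrary: h) auto

lemma qint_neg: "qint q (- n) = - qint q n"
  unfolding qint_def by (simp add: minus_divide_left)
lemma qint_0[simp]: "qint q 0 = 0"
  unfolding qint_def by simp

lemma P_prod: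
  assumes "\<forall>i<length u. h + psum u i \<ge> 0"
  shows "(\<Prod>i=1..length u. qint q (h + psum u (i - 1) + (if u ! (i - 1) = X then mm else 0))) = P q mm h u"
  using assms
proof (induction u arbitrary: h)
  case Nil then show ?case by simp
next
  case (Cons a u)
  have "(\<Prod>i=1..length (a#u). qint q (h + psum (a#u) (i - 1) + (if (a#u) ! (i - 1) = X then mm else 0)))
      = (\<Prod>i<length (a#u). qint q (h + psum (a#u) i + (if (a#u) ! i = X then mm else 0)))"
    by (simp add: prod.atLeast1_atMost_eq atLeast0LessThan)
  also have "\<dots> = qint q (h + (if a = X then mm else 0)) * (\<Prod>i<length u. qint q ((h + bar a) + psum u i + (if u ! i = X then mm else 0)))"
    unfolding length_Cons prod.lessThan_Suc_shift by (simp add: add.assoc del: prod.lessThan_Suc)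
  also have "(\<Prod>i<length u. qint q ((h + bar a) + psum u i + (if u ! i = X then mm else 0))) = P q mm (h + bar a) u"
  proof -
    have "\<forall>i<length u. h + bar a + psum u i \<ge> 0"
      using Cons.prems by (auto dest: spec[of _ "Suc _"] simp: add.assoc)
    from Cons.IH[OF this] show ?thesis
      by (simp add: prod.atLeast1_atMost_eq atLeast0LessThan)
  qed
  finally show ?case using Cons.prems by (auto dest: spec[of _ 0])
qed

lemma P_nonneg:
  "P q mm h u \<noteq> 0 \<Longrightarrow> i < length u \<Longrightarrow> h + psum u i \<ge> 0"
proof (induction u arbitrary: h i)
  case Nil then show ?case by simp
next
  case (Cons a u)
  show ?case
  proof (cases i)
    case 0 then show ?thesis using Cons.prems by (auto split: if_splits)
  next
    case (Suc j)
    then have "h + bar a + psum u j \<ge> 0" using Cons by (auto split: if_splits)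
    then show ?thesis using Suc by simp
  qed
qed

lemma sum_apply_fun: "(\<Sum>u\<in>S. f u) z = (\<Sum>u\<in>S. f u z)"
  by (induction S rule: infinite_finite_induct) (auto simp: plus_fun_def zero_fun_def)

lemma finite_Cat: "finite (Cat n)"
proof -
  have "Cat n \<subseteq> {xs. set xs \<subseteq> {X, Y} \<and> length xs = 2 * n}"
    unfolding Cat_def using letter.exhaust by auto
  then show ?thesis by (rule finite_subset) (simp add: finite_lists_length_eq)
qed

lemma Delta_eval:
  "Delta q mm n z = (if length z = 2 * n \<and> endh 0 z = 0 then P q mm 0 z else 0)"
proof -
  have "Delta q mm n z = (\<Sum>u\<in>Cat n. (if z = u then (\<Prod>i=1..2*n. qint q (psum u (i - 1) + (if u ! (i - 1) = X then mm else 0))) else 0))"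
    unfolding Delta_def smult_V_def basis_word_def
    by (simp add: sum_apply_fun cong: if_cong) (intro sum.cong; simp)
  also have "\<dots> = (if z \<in> Cat n then (\<Prod>i=1..2*n. qint q (psum z (i - 1) + (if z ! (i - 1) = X then mm else 0))) else 0)"
    using finite_Cat by (simp add: sum.delta')
  also have "\<dots> = (if length z = 2 * n \<and> endh 0 z = 0 then P q mm 0 z else 0)"
  proof (cases "z \<in> Cat n")
    case True
    then have c: "catalan z" "length z = 2 * n" by (auto simp: Cat_def)
    have nn: "\<forall>i<length z. 0 + psum z i \<ge> 0"
    proof (intro allI impI)
      fix i assume "i < length z"
      show "0 + psum z i \<ge> 0"
      proof (cases "i = 0")
        case False
        then show ?thesis using c(1) \<open>i < length z\<close> unfolding catalan_def by auto
      qed simp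
    qed
    have "(\<Prod>i=1..2*n. qint q (psum z (i - 1) + (if z ! (i - 1) = X then mm else 0))) = P q mm 0 z"
      using P_prod[OF nn, of q mm] c by simp
    then show ?thesis using True c by (auto simp: endh_psum catalan_def)
  next
    case False
    show ?thesis
    proof (cases "length z = 2 * n \<and> endh 0 z = 0 \<and> P q mm 0 z \<noteq> 0")
      case True
      then have "\<forall>i<length z. psum z i \<ge> 0" using P_nonneg[of q mm 0 z] by auto
      then have "catalan z" using True unfolding catalan_def by (auto simp: endh_psum)
      then show ?thesis using False True by (auto simp: Cat_def)
    qed (use False in auto)
  qed
  finally show ?thesis .
qed

lemma swap_swap[simp]: "swap_letter (swap_letter a) = a"
  by (cases a) (auto simp: swap_letter_def)

lemma swap_comp[simp]: "swap_letter \<circ> swap_letter = id"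
  by (auto simp: fun_eq_iff)

lemma map_swap_swap[simp]: "map swap_letter (map swap_letter u) = u"
  by simp

lemma Delta_tilde_eval: "Delta_tilde q mm n z = Delta q mm n (map swap_letter z)"
proof -
  have e: "(z = map swap_letter u) = (map swap_letter z = u)" for u
    by auto
  show ?thesis
    unfolding Delta_def Delta_tilde_def smult_V_def basis_word_def
    by (simp add: sum_apply_fun e cong: if_cong)
qed

lemma P_append: "P q mm h (a @ b) = P q mm h a * P q mm (endh h a) b"
  by (induction a arbitrary: h) auto

lemma endh_append: "endh h (a @ b) = endh (endh h a) b"
  by (induction a arbitrary: h) auto

lemma endh_sum: "endh h u = h + (\<Sum>a\<leftarrow>u. bar a)"
  by (induction u arbitrary: h) auto

lemma sum_swap: "sum_list (map (bar \<circ> swap_letter) u) = - sum_list (map bar u)"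
  by (induction u) (auto simp: swap_letter_def bar_def)

lemma endh_swap: "endh h (map swap_letter u) = 2 * h - endh h u"
  by (simp add: endh_sum sum_swap)

lemma endh_rep: "endh h (replicate k a) = h + int k * bar a"
  by (induction k arbitrary: h) (auto simp: algebra_simps)

lemma P_P2: "h \<le> m \<Longrightarrow> P q (- m) h u = P2 q m h u"
proof (induction u arbitrary: h)
  case Nil then show ?case by simp
next
  case (Cons a u)
  show ?case
  proof (cases "a = X")
    case True
    show ?thesis
    proof (cases "h = m")
      case True with \<open>a = X\<close> show ?thesis by simp
    next
      case False
      then have "h + bar a \<le> m" using Cons.prems True by (simp add: bar_def)
      then show ?thesis using Cons by simp
    qed
  next
    case False
    then have "h + bar a \<le> m" using Cons.prems by (simp add: bar_def)
    then show ?thesis using Cons False by simp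
  qed
qed

lemma P2_swap: "P2 q m (m - h) (map swap_letter u) = (-1) ^ length u * P2 q m h u"
proof (induction u arbitrary: h)
  case Nil then show ?case by simp
next
  case (Cons a u)
  show ?case
  proof (cases a)
    case X
    have "P2 q m (m - h) (map swap_letter (a#u)) = (if 0 \<le> h \<and> h \<le> m then qint q (m-h) else 0) * P2 q m (m - (h+1)) (map swap_letter u)"
      using X by (simp add: swap_letter_def bar_def diff_diff_eq)
    also have "\<dots> = (if 0 \<le> h \<and> h \<le> m then qint q (m-h) else 0) * ((-1) ^ length u * P2 q m (h+1) u)"
      using Cons.IH by simp
    also have "\<dots> = (-1) ^ length (a#u) * P2 q m h (a#u)"
      using X qint_neg[of q "m - h"] by (simp add: bar_def)
    finally show ?thesis .
  next
    case Y
    have "P2 q m (m - h) (map swap_letter (a#u)) = (if 0 \<le> h \<and> h \<le> m then qint q (-h) else 0) * P2 q m (m - (h-1)) (map swap_letter u)"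
      using Y by (simp add: swap_letter_def bar_def algebra_simps)
    also have "\<dots> = (if 0 \<le> h \<and> h \<le> m then qint q (-h) else 0) * ((-1) ^ length u * P2 q m (h-1) u)"
      using Cons.IH by simp
    also have "\<dots> = (-1) ^ length (a#u) * P2 q m h (a#u)"
      using Y qint_neg[of q h] by (simp add: bar_def)
    finally show ?thesis .
  qed
qed

lemma qfact_Suc: "qfact q (Suc n) = qint q (int (Suc n)) * qfact q n"
  unfolding qfact_def by (simp add: prod.cl_ivl_Suc)

lemma P_Y: "P q mm (int r) (replicate r Y) = qfact q r"
  by (induction r) (auto simp: qfact_Suc qfact_def bar_def)

lemma P_X: "h + l \<le> m \<Longrightarrow> qfact q (m - h - l) * P q (- int m) (int h) (replicate l X) = (-1) ^ l * qfact q (m - h)"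
proof (induction l arbitrary: h)
  case 0 then show ?case by simp
next
  case (Suc l)
  have IH: "qfact q (m - (h+1) - l) * P q (- int m) (int (h+1)) (replicate l X) = (-1) ^ l * qfact q (m - (h+1))"
    using Suc.IH[of "h+1"] Suc.prems by simp
  have mh: "m - h = Suc (m - (h+1))" using Suc.prems by simp
  have "qfact q (m - h - Suc l) * P q (- int m) (int h) (replicate (Suc l) X)
      = qint q (int h - int m) * (qfact q (m - (h+1) - l) * P q (- int m) (int (h+1)) (replicate l X))"
    by (simp add: bar_def algebra_simps)
  also have "\<dots> = qint q (int h - int m) * ((-1) ^ l * qfact q (m - (h+1)))" using IH by simp
  also have "\<dots> = (-1) ^ Suc l * qfact q (m - h)"
    unfolding mh qfact_Suc using Suc.prems qint_neg[of q "int m - int h"]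
    by (simp add: of_nat_diff)
  finally show ?case .
qed


lemma bar_X[simp]: "bar X = 1" and bar_Y[simp]: "bar Y = -1"
  by (auto simp: bar_def)

lemma del_left_pow_eval: "del_left_pow a k v w = v (replicate k a @ w)"
  unfolding del_left_pow_def
  by (induction k arbitrary: v w) (auto simp: funpow_Suc_right del_left_def simp del: funpow.simps)

lemma del_right_pow_eval: "del_right_pow a k v w = v (w @ replicate k a)"
  unfolding del_right_pow_def
  by (induction k arbitrary: v w) (auto simp: funpow_Suc_right del_right_def replicate_append_same simp del: funpow.simps)

lemma neg1_pow_parity: "even (a + b) \<Longrightarrow> (-1::'a::ring_1) ^ a = (-1) ^ b"
  by (cases "even a") (auto simp: neg_one_even_power neg_one_odd_power)

lemma main_pt:
  fixes q :: "'a::field" and m l r :: nat and N :: int and w :: word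
  assumes lm: "l \<le> m" and rm: "r \<le> m"
  shows "qfact q (m - l) * qfact q (m - r) *
     (if N \<ge> 0 then (-1) ^ nat N * Delta q (- int m) (nat N) (replicate l X @ w @ replicate r Y) else 0)
   = qfact q l * qfact q r *
     (if N - (int l + int r - int m) \<ge> 0 then (-1) ^ nat (N - (int l + int r - int m)) *
        Delta q (- int m) (nat (N - (int l + int r - int m))) (replicate (m - l) X @ map swap_letter w @ replicate (m - r) Y) else 0)"
proof -
  define L where "L = length w"
  define S where "S = sum_list (map bar w)"
  define u where "u = replicate l X @ w @ replicate r Y"
  define v where "v = replicate (m - l) X @ map swap_letter w @ replicate (m - r) Y"
  have lu: "length u = l + L + r" unfolding u_def L_def by simp
  have lv: "length v = (m - l) + L + (m - r)" unfolding v_def L_def by simp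
  have eu: "endh 0 u = int l + S - int r"
    unfolding u_def S_def by (simp add: endh_sum sum_list_replicate)
  have ev: "endh 0 v = int r - int l - S"
    unfolding v_def S_def using lm rm by (simp add: endh_sum sum_list_replicate sum_swap of_nat_diff)
  show ?thesis
  proof (cases "int l + int L + int r = 2 * N \<and> S = int r - int l")
    case False
    have "(if N \<ge> 0 then (-1) ^ nat N * Delta q (- int m) (nat N) u else 0) = (0::'a)"
      using False lu eu by (auto simp: Delta_eval)
    moreover have "(if N - (int l + int r - int m) \<ge> 0 then (-1) ^ nat (N - (int l + int r - int m)) *
        Delta q (- int m) (nat (N - (int l + int r - int m))) v else 0) = (0::'a)"
      using False lv ev lm rm by (auto simp: Delta_eval)
    ultimately show ?thesis unfolding u_def v_def by simp
  next
    case True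
    then have "N \<ge> 0" by linarith
    then obtain n where nN: "N = int n" using nonneg_int_cases by blast
    have n2: "l + L + r = 2 * n" using True nN by linarith
    have nn2: "N - (int l + int r - int m) = int (n + m - l - r)"
      using nN n2 lm rm by linarith
    have Sr: "endh (int l) w = int r" using True by (simp add: endh_sum S_def)
    have Sr2: "endh (int (m - l)) (map swap_letter w) = int (m - r)"
      using True lm rm by (simp add: endh_sum S_def sum_swap of_nat_diff)
    have Pu: "P q (- int m) 0 u = P q (- int m) 0 (replicate l X) * P2 q (int m) (int l) w * qfact q r"
      unfolding u_def P_append endh_rep Sr endh_append
      using P_Y[of q "- int m" r] P_P2[of "int l" "int m" q w] lm by (simp add: Sr)
    have Pv: "P q (- int m) 0 v = P q (- int m) 0 (replicate (m - l) X) * ((-1) ^ L * P2 q (int m) (int l) w) * qfact q (m - r)"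
      unfolding v_def P_append endh_rep endh_append
      using Sr2 P_Y[of q "- int m" "m - r"] P_P2[of "int (m - l)" "int m" q "map swap_letter w"]
        P2_swap[of q "int m" "int l" w] lm by (simp add: of_nat_diff L_def)
    have A: "qfact q (m - l) * P q (- int m) 0 (replicate l X) = (-1) ^ l * qfact q m"
      using P_X[of 0 l m q] lm by simp
    have B: "qfact q l * P q (- int m) 0 (replicate (m - l) X) = (-1) ^ (m - l) * qfact q m"
      using P_X[of 0 "m - l" m q] lm by simp
    have par: "(-1::'a) ^ (n + l) = (-1) ^ ((n + m - l - r) + (m - l) + L)"
      proof (rule neg1_pow_parity)
      have "n + l + ((n + m - l - r) + (m - l) + L) = 2 * (2 * n + m - l - r)"
        using n2 lm rm by arith
      then show "even (n + l + ((n + m - l - r) + (m - l) + L))" by simp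
    qed
    have D1: "Delta q (- int m) n u = P q (- int m) 0 u"
      using lu eu n2 True by (simp add: Delta_eval)
    have D2: "Delta q (- int m) (n + m - l - r) v = P q (- int m) 0 v"
    proof -
      have "length v = 2 * (n + m - l - r)" using lv n2 lm rm by arith
      then show ?thesis using ev True by (simp add: Delta_eval)
    qed
    define K where "K = qfact q (m - r) * P2 q (int m) (int l) w * qfact q r"
    have "qfact q (m - l) * qfact q (m - r) * ((-1) ^ n * P q (- int m) 0 u)
        = (-1) ^ n * K * (qfact q (m - l) * P q (- int m) 0 (replicate l X))"
      unfolding Pu K_def by (simp add: algebra_simps)
    also have "\<dots> = (-1) ^ n * K * ((-1) ^ l * qfact q m)" by (simp only: A)
    also have "\<dots> = (-1) ^ (n + l) * (qfact q m * K)" by (simp add: power_add algebra_simps)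
    also have "\<dots> = (-1) ^ ((n + m - l - r) + (m - l) + L) * (qfact q m * K)"
      using par by simp
    also have "\<dots> = (-1) ^ (n + m - l - r) * (-1) ^ L * K * ((-1) ^ (m - l) * qfact q m)"
      by (simp add: power_add algebra_simps)
    also have "\<dots> = (-1) ^ (n + m - l - r) * (-1) ^ L * K * (qfact q l * P q (- int m) 0 (replicate (m - l) X))"
      by (simp only: B)
    also have "\<dots> = qfact q l * qfact q r * ((-1) ^ (n + m - l - r) * P q (- int m) 0 v)"
      unfolding Pv K_def by (simp add: algebra_simps)
    finally show ?thesis
      unfolding u_def[symmetric] v_def[symmetric] nn2 using nN D1 D2 by simp
  qed
qed


lemma swap_X[simp]: "swap_letter X = Y" and swap_Y[simp]: "swap_letter Y = X"
  by (auto simp: swap_letter_def)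

lemma if_app: "(if c then f else g) x = (if c then f x else g x)"
  by simp

theorem lemma6p5:
  fixes q :: "'a::field_char_0" and m l r :: nat
  assumes "q \<noteq> 0" and "\<forall>n>0. q ^ n \<noteq> 1"
    and "l \<le> m" and "r \<le> m"
  shows "ls_smult (qfact q (m - l) * qfact q (m - r))
           (to_laurent (ps_map (\<lambda>v. del_left_pow X l (del_right_pow Y r v))
                                (ps_neg (Delta_ps q (- int m)))))
       = ls_smult (qfact q l * qfact q r)
           (lshift (int l + int r - int m)
             (to_laurent (ps_map (\<lambda>v. del_left_pow Y (m - l) (del_right_pow X (m - r) v))
                                  (ps_neg (Delta_tilde_ps q (- int m))))))"
proof (intro ext)
  fix N :: int and w :: word
  show "ls_smult (qfact q (m - l) * qfact q (m - r))
           (to_laurent (ps_map (\<lambda>v. del_left_pow X l (del_right_pow Y r v))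
                                (ps_neg (Delta_ps q (- int m))))) N w
       = ls_smult (qfact q l * qfact q r)
           (lshift (int l + int r - int m)
             (to_laurent (ps_map (\<lambda>v. del_left_pow Y (m - l) (del_right_pow X (m - r) v))
                                  (ps_neg (Delta_tilde_ps q (- int m)))))) N w"
    using main_pt[OF assms(3,4), of q N w]
    unfolding ls_smult_def smult_V_def to_laurent_def ps_map_def ps_neg_def Delta_ps_def
      Delta_tilde_ps_def lshift_def del_left_pow_eval del_right_pow_eval Delta_tilde_eval
    by (simp add: append_assoc if_app split del: if_split cong: if_cong)
qed

end
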